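(* Let $P$ be a domain and $D\ge 2$ an integer, and let $R\subseteq P$. Suppose that initially each pixel of $R$ carries exactly one unit of snow, the pixels of $P\setminus R$ carry no snow, and the snowblower stands on a pixel of $P\setminus R$. Then every sequence of moves in the default model that obeys the capacity constraint and after which no pixel of $P$ carries snow consists of at least $|R|$ moves and of at least $\frac{1}{D}\sum_{q\in R}\mathrm{vdist}(q)$ moves. (Consequently the same bounds hold in the adjustable-throw and fixed-throw models.)
   Context: A pixel is a closed unit square $[i,i+1]\times[j,j+1]$, $i,j\in\mathbb{Z}$; two pixels are adjacent if they share a side. The domain $P$ is a finite set of pixels whose dual graph $G_P$ (vertex per pixel, edges between adjacent pixels) is connected. A boundary side is a side of a pixel of $P$ not shared with another pixel of $P$; a boundary pixel is a pixel of $P$ with a boundary side. For $q\in P$, $\mathrm{vdist}(q)=1+\min_{b}\mathrm{dist}_{G_P}(q,b)$, the minimum over boundary pixels $b$ of $P$. A move: the snowblower goes from its pixel $v$ to an adjacent pixel $u\in P$, and upon entering $u$ all snow on $u$ is thrown onto the pixel adjacent to $u$ in a chosen direction (default model: forward, left, right, or backward onto $v$; adjustable-throw: forward, left, right; fixed-throw: right, all relative to the motion $v\to u$); if that pixel is not in $P$ the snow disappears, otherwise it is added to the snow there. Capacity constraint: at all times every pixel of $P$ carries at most $D$ units of snow. *)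

theory Defs
  imports Complex_Main
begin

text \<open>A pixel [i,i+1] x [j,j+1] is represented by its lower-left corner (i,j).\<close>
type_synonym pixel = "int \<times> int"

definition adjacent :: "pixel \<Rightarrow> pixel \<Rightarrow> bool" where
  "adjacent p q \<longleftrightarrow> \<bar>fst p - fst q\<bar> + \<bar>snd p - snd q\<bar> = 1"

definition gpath :: "pixel set \<Rightarrow> pixel list \<Rightarrow> bool" where
  "gpath P xs \<longleftrightarrow> xs \<noteq> [] \<and> set xs \<subseteq> P \<and> (\<forall>i. Suc i < length xs \<longrightarrow> adjacent (xs ! i) (xs ! Suc i))"

definition domain :: "pixel set \<Rightarrow> bool" where
  "domain P \<longleftrightarrow> finite P \<and> P \<noteq> {} \<and>
     (\<forall>p\<in>P. \<forall>q\<in>P. \<exists>xs. gpath P xs \<and> hd xs = p \<and> last xs = q)"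

definition gdist :: "pixel set \<Rightarrow> pixel \<Rightarrow> pixel \<Rightarrow> nat" where
  "gdist P p q = (LEAST n. \<exists>xs. gpath P xs \<and> hd xs = p \<and> last xs = q \<and> length xs = Suc n)"

definition boundary_pixel :: "pixel set \<Rightarrow> pixel \<Rightarrow> bool" where
  "boundary_pixel P b \<longleftrightarrow> b \<in> P \<and> (\<exists>q. adjacent b q \<and> q \<notin> P)"

definition vdist :: "pixel set \<Rightarrow> pixel \<Rightarrow> nat" where
  "vdist P q = 1 + Min (gdist P q ` {b. boundary_pixel P b})"

datatype throw = Forward | Left | Right | Backward

datatype model = Default | Adjustable | Fixed

definition allowed :: "model \<Rightarrow> throw set" where
  "allowed M = (case M of Default \<Rightarrow> {Forward, Left, Right, Backward}
                        | Adjustable \<Rightarrow> {Forward, Left, Right}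
                        | Fixed \<Rightarrow> {Right})"

text \<open>Throw vector relative to the motion vector m = (dx,dy); left = counterclockwise.\<close>
definition throw_vec :: "int \<times> int \<Rightarrow> throw \<Rightarrow> int \<times> int" where
  "throw_vec m t = (case t of Forward \<Rightarrow> m
                           | Left \<Rightarrow> (- snd m, fst m)
                           | Right \<Rightarrow> (snd m, - fst m)
                           | Backward \<Rightarrow> (- fst m, - snd m))"

text \<open>State: position of the snowblower and amount of snow on each pixel.
  The move v -> u with throw t: snow on u goes to the pixel w next to u in direction t,
  disappearing if w is not in P.\<close>
definition move :: "pixel set \<Rightarrow> pixel \<times> (pixel \<Rightarrow> nat) \<Rightarrow> pixel \<Rightarrow> throw \<Rightarrow> pixel \<times> (pixel \<Rightarrow> nat)" where
  "move P st u t =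
     (let v = fst st; s = snd st;
          w = (fst u + fst (throw_vec (fst u - fst v, snd u - snd v) t),
               snd u + snd (throw_vec (fst u - fst v, snd u - snd v) t))
      in (u, if w \<in> P then (s(u := 0))(w := s w + s u) else s(u := 0)))"

definition capacity_ok :: "nat \<Rightarrow> pixel set \<Rightarrow> (pixel \<Rightarrow> nat) \<Rightarrow> bool" where
  "capacity_ok D P s \<longleftrightarrow> (\<forall>p\<in>P. s p \<le> D)"

fun valid_run :: "model \<Rightarrow> nat \<Rightarrow> pixel set \<Rightarrow> pixel \<times> (pixel \<Rightarrow> nat) \<Rightarrow> (pixel \<times> throw) list \<Rightarrow> bool" where
  "valid_run M D P st [] \<longleftrightarrow> capacity_ok D P (snd st)"
| "valid_run M D P st ((u, t) # ms) \<longleftrightarrow>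
     capacity_ok D P (snd st) \<and> u \<in> P \<and> adjacent (fst st) u \<and> t \<in> allowed M \<and>
     valid_run M D P (move P st u t) ms"

fun run_final :: "pixel set \<Rightarrow> pixel \<times> (pixel \<Rightarrow> nat) \<Rightarrow> (pixel \<times> throw) list \<Rightarrow> pixel \<times> (pixel \<Rightarrow> nat)" where
  "run_final P st [] = st"
| "run_final P st ((u, t) # ms) = run_final P (move P st u t) ms"

end

theory Submission
  imports Defs
begin

lemma gdist_path:
  assumes "domain P" "p \<in> P" "q \<in> P"
  shows "\<exists>xs. gpath P xs \<and> hd xs = p \<and> last xs = q \<and> length xs = Suc (gdist P p q)"
proof -
  obtain xs where xs: "gpath P xs" "hd xs = p" "last xs = q"
    using assms unfolding domain_def by blast
  then have "\<exists>n xs. gpath P xs \<and> hd xs = p \<and> last xs = q \<and> length xs = Suc n"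
    by (metis gpath_def length_greater_0_conv Suc_pred)
  then show ?thesis unfolding gdist_def by (rule LeastI_ex)
qed

lemma gdist_le:
  assumes "gpath P xs" "hd xs = p" "last xs = q"
  shows "gdist P p q \<le> length xs - 1"
proof -
  have "length xs = Suc (length xs - 1)" using assms(1) by (simp add: gpath_def)
  then show ?thesis unfolding gdist_def using assms by (intro Least_le) metis
qed

lemma gdist_adj:
  assumes "domain P" "u \<in> P" "w \<in> P" "b \<in> P" "adjacent u w"
  shows "gdist P u b \<le> Suc (gdist P w b)"
proof -
  obtain xs where xs: "gpath P xs" "hd xs = w" "last xs = b" "length xs = Suc (gdist P w b)"
    using gdist_path[OF assms(1,3,4)] by blast
  have ne: "xs \<noteq> []" using xs by (simp add: gpath_def)
  have "gpath P (u # xs)"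
    unfolding gpath_def
  proof (intro conjI allI impI)
    show "set (u # xs) \<subseteq> P" using xs assms by (auto simp: gpath_def)
  next
    fix i assume i: "Suc i < length (u # xs)"
    show "adjacent ((u # xs) ! i) ((u # xs) ! Suc i)"
    proof (cases i)
      case 0 then show ?thesis using xs ne assms by (simp add: hd_conv_nth)
    next
      case (Suc j) then show ?thesis using xs i by (auto simp: gpath_def)
    qed
  qed simp
  then have "gdist P u b \<le> length (u # xs) - 1"
    by (rule gdist_le) (use xs ne in auto)
  then show ?thesis using xs by simp
qed

lemma boundary_ne:
  assumes "domain P"
  shows "\<exists>b. boundary_pixel P b"
proof -
  have f: "finite P" "P \<noteq> {}" using assms by (auto simp: domain_def)
  define m where "m = Max (fst ` P)"
  have "m \<in> fst ` P" unfolding m_def using f by (intro Max_in) auto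
  then obtain p where p: "p \<in> P" "fst p = m" by auto
  have "(fst p + 1, snd p) \<notin> P"
  proof
    assume "(fst p + 1, snd p) \<in> P"
    then have "fst p + 1 \<le> m" unfolding m_def using f by (metis Max_ge finite_imageI fst_conv image_eqI)
    then show False using p by simp
  qed
  moreover have "adjacent p (fst p + 1, snd p)" by (simp add: adjacent_def)
  ultimately show ?thesis using p unfolding boundary_pixel_def by blast
qed

lemma vdist_adj:
  assumes "domain P" "u \<in> P" "w \<in> P" "adjacent u w"
  shows "vdist P u \<le> Suc (vdist P w)"
proof -
  define B where "B = {b. boundary_pixel P b}"
  have BP: "B \<subseteq> P" by (auto simp: B_def boundary_pixel_def)
  have fin: "finite B" using BP assms(1) by (meson domain_def finite_subset)
  have ne: "B \<noteq> {}" using boundary_ne[OF assms(1)] by (auto simp: B_def)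
  have "Min (gdist P w ` B) \<in> gdist P w ` B" using fin ne by (intro Min_in) auto
  then obtain b where b: "b \<in> B" "gdist P w b = Min (gdist P w ` B)" by auto
  have "Min (gdist P u ` B) \<le> gdist P u b" using fin b by (intro Min_le) auto
  also have "\<dots> \<le> Suc (gdist P w b)" using gdist_adj[OF assms(1,2,3) _ assms(4), of b] b BP by blast
  finally show ?thesis unfolding vdist_def B_def[symmetric] using b by simp
qed

lemma vdist_boundary:
  assumes "domain P" "boundary_pixel P u"
  shows "vdist P u \<le> 1"
proof -
  define B where "B = {b. boundary_pixel P b}"
  have BP: "B \<subseteq> P" by (auto simp: B_def boundary_pixel_def)
  have fin: "finite B" using BP assms(1) by (meson domain_def finite_subset)
  have uP: "u \<in> P" using assms by (simp add: boundary_pixel_def)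
  have "gpath P [u]" using uP by (simp add: gpath_def)
  then have "gdist P u u \<le> 0" using gdist_le[of P "[u]" u u] by simp
  moreover have "Min (gdist P u ` B) \<le> gdist P u u" using fin assms by (intro Min_le) (auto simp: B_def)
  ultimately show ?thesis unfolding vdist_def B_def[symmetric] by simp
qed

lemma throw_adj:
  assumes "adjacent v u"
  shows "adjacent u (fst u + fst (throw_vec (fst u - fst v, snd u - snd v) t),
                     snd u + snd (throw_vec (fst u - fst v, snd u - snd v) t))"
  using assms by (cases t) (auto simp: adjacent_def throw_vec_def)

definition pot :: "pixel set \<Rightarrow> (pixel \<Rightarrow> nat) \<Rightarrow> nat" where
  "pot P s = (\<Sum>p\<in>P. s p * vdist P p)"

lemma step:
  assumes "domain P" "u \<in> P" "adjacent v u" "s u \<le> D"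
  shows "pot P s \<le> pot P (snd (move P (v, s) u t)) + D"
proof -
  define w where "w = (fst u + fst (throw_vec (fst u - fst v, snd u - snd v) t),
                     snd u + snd (throw_vec (fst u - fst v, snd u - snd v) t))"
  have adj: "adjacent u w" unfolding w_def by (rule throw_adj[OF assms(3)])
  have wu: "w \<noteq> u" using adj by (auto simp: adjacent_def)
  have mv: "move P (v, s) u t = (u, if w \<in> P then (s(u := 0))(w := s w + s u) else s(u := 0))"
    by (simp add: move_def w_def Let_def)
  have finP: "finite P" using assms(1) by (simp add: domain_def)
  show ?thesis
  proof (cases "w \<in> P")
    case True
    define s' where "s' = (s(u := 0))(w := s w + s u)"
    have wP': "w \<in> P - {u}" using True wu by simp
    have e1: "pot P s = s u * vdist P u + (s w * vdist P w + (\<Sum>p\<in>P - {u} - {w}. s p * vdist P p))"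
      unfolding pot_def using finP assms(2) wP'
      by (simp add: sum.remove[of P u] sum.remove[of "P - {u}" w])
    have e2: "pot P s' = s' u * vdist P u + (s' w * vdist P w + (\<Sum>p\<in>P - {u} - {w}. s' p * vdist P p))"
      unfolding pot_def using finP assms(2) wP'
      by (simp add: sum.remove[of P u] sum.remove[of "P - {u}" w])
    have e3: "(\<Sum>p\<in>P - {u} - {w}. s' p * vdist P p) = (\<Sum>p\<in>P - {u} - {w}. s p * vdist P p)"
      by (rule sum.cong) (auto simp: s'_def)
    have "s u * vdist P u \<le> s u * Suc (vdist P w)"
      using vdist_adj[OF assms(1,2) True adj] by (rule mult_le_mono2)
    then have "s u * vdist P u \<le> s u * vdist P w + D" using assms(4) by simp
    then have "pot P s \<le> pot P s' + D"
      using e1 e2 e3 wu by (simp add: s'_def algebra_simps)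
    then show ?thesis using mv True s'_def by simp
  next
    case False
    have bd: "boundary_pixel P u" using assms(2) adj False unfolding boundary_pixel_def by blast
    have vd: "vdist P u \<le> 1" by (rule vdist_boundary[OF assms(1) bd])
    have e1: "pot P s = s u * vdist P u + (\<Sum>p\<in>P - {u}. s p * vdist P p)"
      unfolding pot_def using finP assms(2) by (simp add: sum.remove[of P u])
    have e2: "pot P (s(u:=0)) = (\<Sum>p\<in>P - {u}. s p * vdist P p)"
      unfolding pot_def using finP assms(2) by (simp add: sum.remove[of P u])
    have "s u * vdist P u \<le> s u * 1" using vd by (rule mult_le_mono2)
    then have "s u * vdist P u \<le> D" using assms(4) by linarith
    then have "pot P s \<le> pot P (s(u:=0)) + D" using e1 e2 by linarith
    then show ?thesis using mv False by simp
  qed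
qed

lemma run_pot:
  assumes "domain P"
  shows "valid_run M D P st ms \<Longrightarrow> pot P (snd st) \<le> pot P (snd (run_final P st ms)) + D * length ms"
proof (induction ms arbitrary: st)
  case Nil then show ?case by simp
next
  case (Cons m ms)
  obtain u t where m: "m = (u, t)" by fastforce
  obtain v s where st: "st = (v, s)" by fastforce
  have h: "capacity_ok D P s" "u \<in> P" "adjacent v u" "valid_run M D P (move P (v, s) u t) ms"
    using Cons.prems m st by auto
  have "pot P s \<le> pot P (snd (move P (v, s) u t)) + D"
    using step[OF assms h(2,3)] h(1,2) by (simp add: capacity_ok_def)
  moreover have "pot P (snd (move P (v, s) u t)) \<le> pot P (snd (run_final P (move P (v, s) u t) ms)) + D * length ms"
    using Cons.IH h(4) by blast
  ultimately show ?case using m st by simp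
qed

lemma move_mono:
  assumes "p \<noteq> u"
  shows "snd st p \<le> snd (move P st u t) p"
  using assms by (auto simp: move_def Let_def)

lemma run_mono:
  "p \<notin> fst ` set ms \<Longrightarrow> snd st p \<le> snd (run_final P st ms) p"
proof (induction ms arbitrary: st)
  case Nil then show ?case by simp
next
  case (Cons m ms)
  obtain u t where m: "m = (u, t)" by fastforce
  have "p \<noteq> u" using Cons.prems m by auto
  then have "snd st p \<le> snd (move P st u t) p" by (rule move_mono)
  also have "\<dots> \<le> snd (run_final P (move P st u t) ms) p" using Cons.IH Cons.prems by auto
  finally show ?case using m by simp
qed

theorem lemma2:
  fixes P R :: "pixel set" and D :: nat and v0 :: pixel
    and ms :: "(pixel \<times> throw) list" and M :: model
  assumes "domain P" and "D \<ge> 2" and "R \<subseteq> P"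
    and "v0 \<in> P - R"
    and "valid_run M D P (v0, \<lambda>p. if p \<in> R then 1 else 0) ms"
    and "\<forall>p\<in>P. snd (run_final P (v0, \<lambda>p. if p \<in> R then 1 else 0) ms) p = 0"
  shows "card R \<le> length ms \<and> real (\<Sum>q\<in>R. vdist P q) / real D \<le> real (length ms)"
proof
  let ?st = "(v0, \<lambda>p. if p \<in> R then 1 else 0) :: pixel \<times> (pixel \<Rightarrow> nat)"
  have finP: "finite P" using assms(1) by (simp add: domain_def)
  have "R \<subseteq> fst ` set ms"
  proof
    fix q assume q: "q \<in> R"
    show "q \<in> fst ` set ms"
    proof (rule ccontr)
      assume "q \<notin> fst ` set ms"
      then have "snd ?st q \<le> snd (run_final P ?st ms) q" by (rule run_mono)
      then show False using q assms(3,6) by auto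
    qed
  qed
  then have "card R \<le> card (fst ` set ms)" by (intro card_mono) auto
  also have "\<dots> \<le> card (set ms)" by (rule card_image_le) simp
  also have "\<dots> \<le> length ms" by (rule card_length)
  finally show "card R \<le> length ms" .
next
  let ?st = "(v0, \<lambda>p. if p \<in> R then 1 else 0) :: pixel \<times> (pixel \<Rightarrow> nat)"
  have finP: "finite P" using assms(1) by (simp add: domain_def)
  have "pot P (snd ?st) \<le> pot P (snd (run_final P ?st ms)) + D * length ms"
    by (rule run_pot[OF assms(1,5)])
  moreover have "pot P (snd (run_final P ?st ms)) = 0"
    unfolding pot_def using assms(6) by simp
  moreover have "pot P (snd ?st) = (\<Sum>q\<in>R. vdist P q)"
  proof -
    have "pot P (snd ?st) = (\<Sum>p\<in>P. if p \<in> R then vdist P p else 0)"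
      unfolding pot_def by (intro sum.cong) auto
    also have "\<dots> = (\<Sum>p\<in>P \<inter> R. vdist P p)" using finP by (simp add: sum.If_cases)
    also have "P \<inter> R = R" using assms(3) by blast
    finally show ?thesis .
  qed
  ultimately have "(\<Sum>q\<in>R. vdist P q) \<le> D * length ms" by simp
  then have "real (\<Sum>q\<in>R. vdist P q) \<le> real D * real (length ms)" by (metis of_nat_le_iff of_nat_mult)
  moreover have "real D > 0" using assms(2) by simp
  ultimately show "real (\<Sum>q\<in>R. vdist P q) / real D \<le> real (length ms)"
    by (simp add: divide_le_eq mult.commute)
qed

end
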